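(* Every set strongly star Lindelöf space of cardinality less than $\mathfrak d$ is set strongly star Menger.
   Context: For a family $\mathcal U$ of subsets of $X$ and $A\subseteq X$, $st(A,\mathcal U)=\bigcup\{U\in\mathcal U: U\cap A\neq\emptyset\}$. $X$ is set strongly star Lindelöf if for every nonempty $A\subseteq X$ and every family $\mathcal U$ of open subsets with $\overline A\subseteq\bigcup\mathcal U$ there is a countable $F\subseteq\overline A$ with $A\subseteq st(F,\mathcal U)$. $X$ is set strongly star Menger if for every nonempty $A\subseteq X$ and every sequence $(\mathcal U_n:n\in\omega)$ of families of open sets with $\overline A\subseteq\bigcup\mathcal U_n$ for all $n$, there are finite $F_n\subseteq\overline A$ with $A\subseteq\bigcup_n st(F_n,\mathcal U_n)$. $\mathfrak d$ is the minimal cardinality of a cofinal subset of $(\omega^\omega,\leq^* )$. *)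

theory Defs
  imports "HOL-Analysis.Analysis" "HOL-Library.Equipollence"
begin

definition star :: "'a set \<Rightarrow> 'a set set \<Rightarrow> 'a set" where
  "star A \<U> = \<Union>{U \<in> \<U>. U \<inter> A \<noteq> {}}"

definition set_strongly_star_Lindelof :: "'a topology \<Rightarrow> bool" where
  "set_strongly_star_Lindelof X \<longleftrightarrow>
     (\<forall>A \<U>. A \<noteq> {} \<and> A \<subseteq> topspace X \<and> (\<forall>U\<in>\<U>. openin X U)
        \<and> X closure_of A \<subseteq> \<Union>\<U> \<longrightarrow>
        (\<exists>F. countable F \<and> F \<subseteq> X closure_of A \<and> A \<subseteq> star F \<U>))"

definition set_strongly_star_Menger :: "'a topology \<Rightarrow> bool" where
  "set_strongly_star_Menger X \<longleftrightarrow>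
     (\<forall>A (\<U> :: nat \<Rightarrow> 'a set set). A \<noteq> {} \<and> A \<subseteq> topspace X
        \<and> (\<forall>n. (\<forall>U\<in>\<U> n. openin X U) \<and> X closure_of A \<subseteq> \<Union>(\<U> n)) \<longrightarrow>
        (\<exists>F :: nat \<Rightarrow> 'a set. (\<forall>n. finite (F n) \<and> F n \<subseteq> X closure_of A)
           \<and> A \<subseteq> (\<Union>n. star (F n) (\<U> n))))"

definition le_star :: "(nat \<Rightarrow> nat) \<Rightarrow> (nat \<Rightarrow> nat) \<Rightarrow> bool" where
  "le_star f g \<longleftrightarrow> (\<forall>\<^sub>F n in sequentially. f n \<le> g n)"

definition dominating :: "(nat \<Rightarrow> nat) set \<Rightarrow> bool" where
  "dominating D \<longleftrightarrow> (\<forall>g. \<exists>f\<in>D. le_star g f)"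

text \<open>A set has cardinality less than \<open>\<dd>\<close> (the dominating number) iff it is
  strictly smaller than every cofinal (dominating) family, since \<open>\<dd>\<close> is the
  minimum of the cardinalities of such families.\<close>
definition less_than_dfrak :: "'a set \<Rightarrow> bool" where
  "less_than_dfrak S \<longleftrightarrow> (\<forall>D. dominating D \<longrightarrow> S \<prec> D)"

end

theory Submission
  imports Defs
begin

theorem proposition2p6:
  fixes X :: "'a topology"
  assumes "set_strongly_star_Lindelof X"
    and "less_than_dfrak (topspace X)"
  shows "set_strongly_star_Menger X"
  unfolding set_strongly_star_Menger_def
proof (intro allI impI)
  fix A and U :: "nat \<Rightarrow> 'a set set"
  assume H: "A \<noteq> {} \<and> A \<subseteq> topspace X
        \<and> (\<forall>n. (\<forall>U\<in>U n. openin X U) \<and> X closure_of A \<subseteq> \<Union>(U n))"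
  from H have Ane: "A \<noteq> {}" and HA: "A \<subseteq> topspace X"
    and Hop: "\<And>n. \<forall>V\<in>U n. openin X V" and Hcl: "\<And>n. X closure_of A \<subseteq> \<Union>(U n)"
    by auto
  have SL: "\<exists>F. countable F \<and> F \<subseteq> X closure_of B \<and> B \<subseteq> star F W"
    if "B \<noteq> {}" "B \<subseteq> topspace X" "\<forall>V\<in>W. openin X V" "X closure_of B \<subseteq> \<Union>W" for B W
    using assms(1) that unfolding set_strongly_star_Lindelof_def by blast
  have "\<forall>n. \<exists>F. countable F \<and> F \<subseteq> X closure_of A \<and> A \<subseteq> star F (U n)"
    using SL[OF Ane HA Hop Hcl] by blast
  then have "\<exists>F. \<forall>n. countable (F n) \<and> F n \<subseteq> X closure_of A \<and> A \<subseteq> star (F n) (U n)"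
    by (rule choice)
  then obtain F where F0: "\<forall>n. countable (F n) \<and> F n \<subseteq> X closure_of A \<and> A \<subseteq> star (F n) (U n)"
    by blast
  have F: "\<And>n. countable (F n)" "\<And>n. F n \<subseteq> X closure_of A"
    "\<And>n. A \<subseteq> star (F n) (U n)" using F0 by auto
  have Fne: "F n \<noteq> {}" for n using F(3)[of n] Ane unfolding star_def by blast
  define e where "e n k = from_nat_into (F n) k" for n k
  have rng: "range (e n) = F n" for n
    unfolding e_def using range_from_nat_into[OF Fne F(1)] by blast
  have ex: "\<exists>k. a \<in> star {e n k} (U n)" if "a \<in> A" for a n
  proof -
    from F(3)[of n] that obtain V x where "V \<in> U n" "x \<in> F n" "x \<in> V" "a \<in> V"
      unfolding star_def by blast
    moreover from \<open>x \<in> F n\<close> rng obtain k where "x = e n k" by blast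
    ultimately show ?thesis unfolding star_def by blast
  qed
  define f where "f a n = (SOME k. a \<in> star {e n k} (U n))" for a n
  have fA: "a \<in> star {e n (f a n)} (U n)" if "a \<in> A" for a n
    unfolding f_def using someI_ex[OF ex[OF that]] .
  have "\<not> dominating (f ` A)"
  proof
    assume "dominating (f ` A)"
    then have "topspace X \<prec> f ` A" using assms(2) unfolding less_than_dfrak_def by blast
    moreover have "f ` A \<lesssim> topspace X"
      using lepoll_trans[OF image_lepoll subset_imp_lepoll] HA by blast
    ultimately show False
      using lepoll_antisym lesspoll_def by blast
  qed
  then obtain g where g: "\<And>a. a \<in> A \<Longrightarrow> \<not> le_star g (f a)"
    unfolding dominating_def by blast
  define G where "G n = e n ` {..g n}" for n
  have G1: "finite (G n) \<and> G n \<subseteq> X closure_of A" for n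
    unfolding G_def using rng F(2) by blast
  have G2: "A \<subseteq> (\<Union>n. star (G n) (U n))"
  proof
    fix a assume a: "a \<in> A"
    have "\<exists>n. f a n < g n"
    proof (rule ccontr)
      assume "\<not> ?thesis"
      then have "le_star g (f a)" unfolding le_star_def by (simp add: not_less)
      with g a show False by blast
    qed
    then obtain n where n: "f a n < g n" by blast
    have "e n (f a n) \<in> G n" unfolding G_def using n by simp
    then have "a \<in> star (G n) (U n)"
      using fA[OF a, of n] unfolding star_def by blast
    then show "a \<in> (\<Union>n. star (G n) (U n))" by blast
  qed
  show "\<exists>F :: nat \<Rightarrow> 'a set. (\<forall>n. finite (F n) \<and> F n \<subseteq> X closure_of A)
           \<and> A \<subseteq> (\<Union>n. star (F n) (U n))"
    using G1 G2 by blast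
qed

end
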